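(* Under the assumptions on $\Psi$ stated in the context, let $T\in(0,\infty]$, let $g^{in}\in L^1_{-2\beta,1}(0,\infty)$ be non-negative, and let $g$ be a weak solution on $[0,T)$. Then for every $q\in(0,\infty)$ and $t\in(0,T)$, $\int_0^q\zeta g(\zeta,t)d\zeta-\int_0^q\zeta g^{in}(\zeta)d\zeta=-\int_0^t\int_0^q\int_{q-\zeta}^\infty\zeta\Psi(\zeta,\eta)g(\zeta,s)g(\eta,s)\,d\eta\, d\zeta\, ds.$
   Context: $\Psi:(0,\infty)^2\to[0,\infty)$ is measurable and symmetric and there are $\beta>0$, $k>0$ with $\Psi(\zeta,\eta)\le k(\zeta\eta)^{-\beta}$ on $(0,1)^2$, $\Psi(\zeta,\eta)\le k\eta\zeta^{-\beta}$ on $(0,1)\times(1,\infty)$, and $\Psi(\zeta,\eta)\le k(\zeta+\eta)$ on $(1,\infty)^2$. $L^1_{-2\beta,1}(0,\infty):=L^1((0,\infty);(\zeta^{-2\beta}+\zeta)d\zeta)$. A weak solution on $[0,T)$ is a non-negative $g\in\mathcal{C}([0,T);L^1(0,\infty))\cap L^\infty(0,T;L^1_{-2\beta,1}(0,\infty))$ such that for every $t\in(0,T)$ and $\omega\in L^\infty(0,\infty)$, $\int_0^\infty[g(\zeta,t)-g^{in}(\zeta)]\omega(\zeta)d\zeta=\frac12\int_0^t\int_0^\infty\int_0^\infty[\omega(\zeta+\eta)-\omega(\zeta)-\omega(\eta)]\Psi(\zeta,\eta)g(\zeta,s)g(\eta,s)d\eta d\zeta ds$. *)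

theory Defs
  imports "HOL-Analysis.Analysis"
begin

definition kernel_assms :: "(real \<Rightarrow> real \<Rightarrow> real) \<Rightarrow> real \<Rightarrow> real \<Rightarrow> bool" where
  "kernel_assms Psi \<beta> k \<longleftrightarrow>
     \<beta> > 0 \<and> k > 0 \<and>
     (\<lambda>p. indicator ({0<..} \<times> {0<..}) p * Psi (fst p) (snd p)) \<in> borel_measurable borel \<and>
     (\<forall>x>0. \<forall>y>0. Psi x y \<ge> 0 \<and> Psi x y = Psi y x) \<and>
     (\<forall>x y. 0 < x \<and> x < 1 \<and> 0 < y \<and> y < 1 \<longrightarrow> Psi x y \<le> k * (x * y) powr (-\<beta>)) \<and>
     (\<forall>x y. 0 < x \<and> x < 1 \<and> 1 < y \<longrightarrow> Psi x y \<le> k * y * x powr (-\<beta>)) \<and>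
     (\<forall>x y. 1 < x \<and> 1 < y \<longrightarrow> Psi x y \<le> k * (x + y))"

definition L1_wt :: "real \<Rightarrow> (real \<Rightarrow> real) \<Rightarrow> bool" where
  "L1_wt \<beta> f \<longleftrightarrow> f \<in> borel_measurable (lebesgue_on {0<..}) \<and>
     set_integrable lebesgue {0<..} (\<lambda>z. (z powr (-2*\<beta>) + z) * f z)"

definition tint :: "ereal \<Rightarrow> real set" where
  "tint T = {t. 0 \<le> t \<and> ereal t < T}"

text \<open>Weak solution on [0,T); g z t is the value at size z and time t.\<close>
definition weak_solution ::
  "(real \<Rightarrow> real \<Rightarrow> real) \<Rightarrow> real \<Rightarrow> ereal \<Rightarrow> (real \<Rightarrow> real) \<Rightarrow> (real \<Rightarrow> real \<Rightarrow> real) \<Rightarrow> bool" where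
  "weak_solution Psi \<beta> T gin g \<longleftrightarrow>
     (\<forall>z>0. \<forall>t\<in>tint T. g z t \<ge> 0) \<and>
     (\<lambda>p. indicator ({0<..} \<times> tint T) p * g (fst p) (snd p)) \<in> borel_measurable borel \<and>
     (\<forall>t\<in>tint T. set_integrable lebesgue {0<..} (\<lambda>z. g z t)) \<and>
     (\<forall>t\<in>tint T. ((\<lambda>s. LINT z:{0<..}|lebesgue. \<bar>g z s - g z t\<bar>) \<longlongrightarrow> 0) (at t within tint T)) \<and>
     (\<exists>C. AE t in lebesgue_on (tint T). L1_wt \<beta> (\<lambda>z. g z t) \<and>
          (LINT z:{0<..}|lebesgue. (z powr (-2*\<beta>) + z) * g z t) \<le> C) \<and>
     (\<forall>t \<omega>. t \<in> tint T \<and> t > 0 \<and> \<omega> \<in> borel_measurable borel \<and> bounded (\<omega> ` {0<..}) \<longrightarrow>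
        (LINT z:{0<..}|lebesgue. (g z t - gin z) * \<omega> z) =
        1/2 * (LINT s:{0<..<t}|lebesgue. LINT z:{0<..}|lebesgue. LINT y:{0<..}|lebesgue.
                 (\<omega> (z + y) - \<omega> z - \<omega> y) * Psi z y * g z s * g y s))"

end

theory Submission imports Defs begin

definition Kf :: "(real \<Rightarrow> real \<Rightarrow> real) \<Rightarrow> real \<times> real \<Rightarrow> real" where
  "Kf Psi p = indicator ({0<..} \<times> {0<..}) p * Psi (fst p) (snd p)"

lemma Kf_meas: assumes "kernel_assms Psi \<beta> k"
  shows "Kf Psi \<in> borel_measurable (lborel \<Otimes>\<^sub>M lborel)"
proof -
  have "Kf Psi \<in> borel_measurable borel"
    using assms unfolding kernel_assms_def Kf_def[abs_def] by simp
  moreover have "sets (lborel \<Otimes>\<^sub>M lborel) = sets (borel :: (real \<times> real) measure)"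
    by (metis borel_prod sets_lborel sets_pair_measure_cong)
  ultimately show ?thesis using measurable_cong_sets by blast
qed

lemma a_le: fixes x \<beta> :: real assumes "x > 0" "\<beta> > 0"
  shows "x powr (-\<beta>) + x \<le> 2 * (x powr (-2*\<beta>) + x)"
proof (cases "x < 1")
  case True
  then have "x powr (-\<beta>) \<le> x powr (-2*\<beta>)" using assms by (intro powr_mono') auto
  moreover have "0 \<le> x powr (-2*\<beta>)" by simp
  ultimately show ?thesis using assms by (smt (verit))
next
  case False
  then have "x powr (-\<beta>) \<le> x powr 0" using assms by (intro powr_mono) auto
  then have "x powr (-\<beta>) \<le> 1" using assms by simp
  then show ?thesis using assms False by (smt (verit) powr_ge_zero)
qed

lemma Psi_bound: assumes K: "kernel_assms Psi \<beta> k" and "z > 0" "y > 0" "z \<noteq> 1" "y \<noteq> 1"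
  shows "Psi z y \<le> 2 * k * ((z powr (-\<beta>) + z) * (y powr (-\<beta>) + y))"
proof -
  from K have b: "\<beta> > 0" and kk: "k > 0" and sym: "Psi z y = Psi y z"
    and c1: "\<And>x y. 0 < x \<and> x < 1 \<and> 0 < y \<and> y < 1 \<Longrightarrow> Psi x y \<le> k * (x * y) powr (-\<beta>)"
    and c2: "\<And>x y. 0 < x \<and> x < 1 \<and> 1 < y \<Longrightarrow> Psi x y \<le> k * y * x powr (-\<beta>)"
    and c3: "\<And>x y. 1 < x \<and> 1 < y \<Longrightarrow> Psi x y \<le> k * (x + y)"
    using assms unfolding kernel_assms_def by auto
  have pz: "z powr (-\<beta>) \<ge> 0" "y powr (-\<beta>) \<ge> 0" by auto
  have "z < 1 \<or> z > 1" "y < 1 \<or> y > 1" using assms by auto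
  then consider "z < 1" "y < 1" | "z < 1" "y > 1" | "z > 1" "y < 1" | "z > 1" "y > 1" by blast
  then show ?thesis
  proof cases
    case 1
    then have "Psi z y \<le> k * (z powr (-\<beta>) * y powr (-\<beta>))" using c1 assms by (simp add: powr_mult)
    also have "\<dots> \<le> k * ((z powr (-\<beta>) + z) * (y powr (-\<beta>) + y))"
      using kk pz assms by (intro mult_left_mono mult_mono) auto
    also have "\<dots> \<le> 2 * k * ((z powr (-\<beta>) + z) * (y powr (-\<beta>) + y))"
      using kk pz assms by (simp add: mult_nonneg_nonneg)
    finally show ?thesis .
  next
    case 2
    then have "Psi z y \<le> k * y * z powr (-\<beta>)" using c2 assms by auto
    also have "\<dots> = k * (z powr (-\<beta>) * y)" by simp
    also have "\<dots> \<le> k * ((z powr (-\<beta>) + z) * (y powr (-\<beta>) + y))"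
      using kk pz assms by (intro mult_left_mono mult_mono) auto
    also have "\<dots> \<le> 2 * k * ((z powr (-\<beta>) + z) * (y powr (-\<beta>) + y))"
      using kk pz assms by (simp add: mult_nonneg_nonneg)
    finally show ?thesis .
  next
    case 3
    then have "Psi y z \<le> k * z * y powr (-\<beta>)" using c2 assms by auto
    then have "Psi z y \<le> k * z * y powr (-\<beta>)" using sym by simp
    also have "\<dots> = k * (z * y powr (-\<beta>))" by simp
    also have "\<dots> \<le> k * ((z powr (-\<beta>) + z) * (y powr (-\<beta>) + y))"
      using kk pz assms by (intro mult_left_mono mult_mono) auto
    also have "\<dots> \<le> 2 * k * ((z powr (-\<beta>) + z) * (y powr (-\<beta>) + y))"
      using kk pz assms by (simp add: mult_nonneg_nonneg)
    finally show ?thesis .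
  next
    case 4
    then have "Psi z y \<le> k * (z + y)" using c3 by auto
    also have "z + y \<le> 2 * (z * y)"
      using 4 by (smt (verit) mult_le_cancel_left1 mult_less_cancel_right2)
    also have "z * y \<le> (z powr (-\<beta>) + z) * (y powr (-\<beta>) + y)"
      using pz assms by (intro mult_mono) auto
    finally show ?thesis using kk by (simp add: mult_left_mono mult_ac)
  qed
qed


lemma prod_integrable:
  fixes f g :: "real \<Rightarrow> real"
  assumes f: "integrable lborel f" and g: "integrable lborel g"
  shows "integrable (lborel \<Otimes>\<^sub>M lborel) (\<lambda>p. f (fst p) * g (snd p))"
proof (rule lborel_pair.Fubini_integrable)
  have [measurable]: "f \<in> borel_measurable lborel" "g \<in> borel_measurable lborel"
    using f g by auto
  show "(\<lambda>p. f (fst p) * g (snd p)) \<in> borel_measurable (lborel \<Otimes>\<^sub>M lborel)" by measurable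
  have "(\<lambda>x. \<integral>y. norm (f (fst (x, y)) * g (snd (x, y))) \<partial>lborel) = (\<lambda>x. \<bar>f x\<bar> * (\<integral>y. \<bar>g y\<bar> \<partial>lborel))"
    by (simp add: abs_mult)
  moreover have "integrable lborel (\<lambda>x. \<bar>f x\<bar> * (\<integral>y. \<bar>g y\<bar> \<partial>lborel))"
    using f by (intro integrable_mult_left) auto
  ultimately show "integrable lborel (\<lambda>x. \<integral>y. norm (f (fst (x, y)) * g (snd (x, y))) \<partial>lborel)"
    by simp
  show "AE x in lborel. integrable lborel (\<lambda>y. f (fst (x, y)) * g (snd (x, y)))"
    using g by (auto intro!: integrable_mult_right)
qed

locale ks =
  fixes Psi :: "real \<Rightarrow> real \<Rightarrow> real" and \<beta> k :: real and h :: "real \<Rightarrow> real"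
  assumes K: "kernel_assms Psi \<beta> k"
    and hm[measurable]: "h \<in> borel_measurable borel"
    and hpos: "\<And>z. 0 \<le> h z" and hzero: "\<And>z. z \<le> 0 \<Longrightarrow> h z = 0"
    and hint: "integrable lborel (\<lambda>z. (z powr (-2*\<beta>) + z) * h z)"
begin

definition P :: "real \<times> real \<Rightarrow> real" where
  "P p = Kf Psi p * h (fst p) * h (snd p)"

lemma Kf_m[measurable]: "Kf Psi \<in> borel_measurable (lborel \<Otimes>\<^sub>M lborel)"
  using Kf_meas[OF K] .

lemma P_m[measurable]: "P \<in> borel_measurable (lborel \<Otimes>\<^sub>M lborel)"
  unfolding P_def[abs_def] by measurable

lemma bpos: "\<beta> > 0" and kpos: "k > 0" using K unfolding kernel_assms_def by auto

lemma Kf_nonneg: "0 \<le> Kf Psi p"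
  using K unfolding kernel_assms_def Kf_def by (auto simp: indicator_def)

lemma P_nonneg: "0 \<le> P p"
  unfolding P_def using Kf_nonneg hpos by simp

lemma P_sym: "P (y, z) = P (z, y)"
  using K unfolding kernel_assms_def Kf_def P_def by (auto simp: indicator_def)

lemma P_zero: "fst p \<le> 0 \<or> snd p \<le> 0 \<Longrightarrow> P p = 0"
  unfolding P_def Kf_def by (auto simp: indicator_def)

lemma P_bound: assumes "fst p \<noteq> 1" "snd p \<noteq> 1"
  shows "P p \<le> 8 * k * (((fst p) powr (-2*\<beta>) + fst p) * h (fst p)) * (((snd p) powr (-2*\<beta>) + snd p) * h (snd p))"
proof (cases "fst p > 0 \<and> snd p > 0")
  case False
  then have "P p = 0" by (meson P_zero not_less)
  moreover have "0 \<le> 8 * k * (((fst p) powr (-2*\<beta>) + fst p) * h (fst p)) * (((snd p) powr (-2*\<beta>) + snd p) * h (snd p))"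
    using False hzero[of "fst p"] hzero[of "snd p"] by auto
  ultimately show ?thesis by simp
next
  case True
  obtain z y where p: "p = (z, y)" by (cases p)
  with True have z: "z > 0" and y: "y > 0" by auto
  have "Psi z y \<le> 2 * k * ((z powr (-\<beta>) + z) * (y powr (-\<beta>) + y))"
    using Psi_bound[OF K z y] assms p by auto
  also have "\<dots> \<le> 2 * k * ((2 * (z powr (-2*\<beta>) + z)) * (2 * (y powr (-2*\<beta>) + y)))"
    using a_le[OF z bpos] a_le[OF y bpos] kpos z y
    by (intro mult_left_mono mult_mono) (auto intro: add_nonneg_nonneg)
  also have "\<dots> = 8 * k * ((z powr (-2*\<beta>) + z) * (y powr (-2*\<beta>) + y))" by (simp add: algebra_simps)
  finally have "Psi z y \<le> 8 * k * ((z powr (-2*\<beta>) + z) * (y powr (-2*\<beta>) + y))" .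
  then have "Psi z y * (h z * h y) \<le> 8 * k * ((z powr (-2*\<beta>) + z) * (y powr (-2*\<beta>) + y)) * (h z * h y)"
    using hpos by (intro mult_right_mono) auto
  moreover have "P p = Psi z y * (h z * h y)" using z y unfolding p P_def Kf_def by simp
  ultimately show ?thesis using p by (simp add: algebra_simps)
qed

lemma AE_ne1: "AE p in lborel \<Otimes>\<^sub>M lborel. fst p \<noteq> (1::real) \<and> snd p \<noteq> (1::real)"
proof (rule lborel_pair.AE_pair_measure)
  show "{x \<in> space (lborel \<Otimes>\<^sub>M lborel). fst x \<noteq> (1::real) \<and> snd x \<noteq> (1::real)} \<in> sets (lborel \<Otimes>\<^sub>M lborel)"
    by measurable
  show "AE x in lborel. AE y in lborel. fst (x, y) \<noteq> (1::real) \<and> snd (x, y) \<noteq> (1::real)"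
    apply (rule eventually_mono[OF AE_lborel_singleton[of "1::real"]])
    apply (rule eventually_mono[OF AE_lborel_singleton[of "1::real"]])
    by simp
qed

lemma P_int: "integrable (lborel \<Otimes>\<^sub>M lborel) P"
proof (rule Bochner_Integration.integrable_bound)
  let ?f = "\<lambda>p. (8 * k * (((fst p) powr (-2*\<beta>) + fst p) * h (fst p))) * (((snd p) powr (-2*\<beta>) + snd p) * h (snd p))"
  show "integrable (lborel \<Otimes>\<^sub>M lborel) ?f"
    using prod_integrable[of "\<lambda>z. 8 * k * ((z powr (-2*\<beta>) + z) * h z)" "\<lambda>z. (z powr (-2*\<beta>) + z) * h z"] hint
    by (auto intro!: integrable_mult_right)
  show "P \<in> borel_measurable (lborel \<Otimes>\<^sub>M lborel)" by measurable
  show "AE p in lborel \<Otimes>\<^sub>M lborel. norm (P p) \<le> norm (?f p)"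
    using AE_ne1
  proof eventually_elim
    case (elim p)
    then show ?case using P_bound[of p] P_nonneg[of p] by (simp add: mult_ac)
  qed
qed

end

definition om :: "real \<Rightarrow> real \<Rightarrow> real" where
  "om q x = x * indicator {0<..<q} x"

definition W :: "real \<Rightarrow> real \<Rightarrow> real \<Rightarrow> real" where
  "W q z y = om q (z + y) - om q z - om q y"

definition Af :: "real \<Rightarrow> real \<Rightarrow> real \<Rightarrow> real" where
  "Af q z y = - (z * indicator {0<..<q} z * (if q \<le> z + y then 1 else 0))"

lemma om_m[measurable]: "om q \<in> borel_measurable borel"
  unfolding om_def[abs_def] by measurable

lemma W_m[measurable]: "(\<lambda>p. W q (fst p) (snd p)) \<in> borel_measurable (lborel \<Otimes>\<^sub>M lborel)"
  unfolding W_def by measurable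

lemma Af_m[measurable]: "(\<lambda>p. Af q (fst p) (snd p)) \<in> borel_measurable (lborel \<Otimes>\<^sub>M lborel)"
  unfolding Af_def by measurable

lemma Af_m'[measurable]: "(\<lambda>p. Af q (snd p) (fst p)) \<in> borel_measurable (lborel \<Otimes>\<^sub>M lborel)"
  unfolding Af_def by measurable

lemma om_bound: "\<bar>om q x\<bar> \<le> q" if "q > 0"
  using that unfolding om_def by (auto simp: indicator_def)

lemma W_bound: "\<bar>W q z y\<bar> \<le> 3 * q" if "q > 0"
  using om_bound[OF that, of "z+y"] om_bound[OF that, of z] om_bound[OF that, of y]
  unfolding W_def by linarith

lemma Af_bound: "\<bar>Af q z y\<bar> \<le> q" if "q > 0"
  using that unfolding Af_def by (auto simp: indicator_def)

lemma W_eq: "z > 0 \<Longrightarrow> y > 0 \<Longrightarrow> W q z y = Af q z y + Af q y z"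
  unfolding W_def Af_def om_def by (auto simp: indicator_def)

context ks begin

lemma int_bounded:
  assumes [measurable]: "(\<lambda>p. F p) \<in> borel_measurable (lborel \<Otimes>\<^sub>M lborel)"
    and b: "\<And>p. \<bar>F p\<bar> \<le> C"
  shows "integrable (lborel \<Otimes>\<^sub>M lborel) (\<lambda>p. F p * P p)"
proof (rule Bochner_Integration.integrable_bound)
  show "integrable (lborel \<Otimes>\<^sub>M lborel) (\<lambda>p. C * P p)"
    using P_int by (rule integrable_mult_right)
  show "(\<lambda>p. F p * P p) \<in> borel_measurable (lborel \<Otimes>\<^sub>M lborel)" by measurable
  show "AE p in lborel \<Otimes>\<^sub>M lborel. norm (F p * P p) \<le> norm (C * P p)"
  proof (intro AE_I2)
    fix p
    have "\<bar>F p\<bar> * P p \<le> C * P p" using b P_nonneg by (intro mult_right_mono) auto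
    then show "norm (F p * P p) \<le> norm (C * P p)" using P_nonneg[of p] b[of p]
      by (simp add: abs_mult)
  qed
qed

lemma key:
  assumes q: "q > 0"
  shows "(\<integral>z. \<integral>y. W q z y * P (z, y) \<partial>lborel \<partial>lborel)
        = 2 * (\<integral>z. \<integral>y. Af q z y * P (z, y) \<partial>lborel \<partial>lborel)"
proof -
  have iW: "integrable (lborel \<Otimes>\<^sub>M lborel) (\<lambda>p. W q (fst p) (snd p) * P p)"
    by (rule int_bounded[OF W_m W_bound[OF q]])
  have iA: "integrable (lborel \<Otimes>\<^sub>M lborel) (\<lambda>p. Af q (fst p) (snd p) * P p)"
    by (rule int_bounded[OF Af_m Af_bound[OF q]])
  have iA': "integrable (lborel \<Otimes>\<^sub>M lborel) (\<lambda>p. Af q (snd p) (fst p) * P p)"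
    by (rule int_bounded[OF Af_m' Af_bound[OF q]])
  have 1: "(\<integral>z. \<integral>y. W q z y * P (z, y) \<partial>lborel \<partial>lborel)
     = integral\<^sup>L (lborel \<Otimes>\<^sub>M lborel) (\<lambda>p. W q (fst p) (snd p) * P p)"
    using lborel_pair.integral_fst'[OF iW] by simp
  have e1a: "(\<integral>z. \<integral>y. Af q z y * P (z, y) \<partial>lborel \<partial>lborel)
     = integral\<^sup>L (lborel \<Otimes>\<^sub>M lborel) (\<lambda>p. Af q (fst p) (snd p) * P p)"
    using lborel_pair.integral_fst'[OF iA] by simp
  have 2: "integral\<^sup>L (lborel \<Otimes>\<^sub>M lborel) (\<lambda>p. W q (fst p) (snd p) * P p)
     = integral\<^sup>L (lborel \<Otimes>\<^sub>M lborel) (\<lambda>p. Af q (fst p) (snd p) * P p + Af q (snd p) (fst p) * P p)"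
  proof (rule Bochner_Integration.integral_cong[OF refl])
    fix p :: "real \<times> real"
    show "W q (fst p) (snd p) * P p = Af q (fst p) (snd p) * P p + Af q (snd p) (fst p) * P p"
    proof (cases "fst p > 0 \<and> snd p > 0")
      case True then show ?thesis using W_eq[of "fst p" "snd p" q] by (simp add: algebra_simps)
    next
      case False then have "P p = 0" by (meson P_zero not_less)
      then show ?thesis by simp
    qed
  qed
  have 3: "integral\<^sup>L (lborel \<Otimes>\<^sub>M lborel) (\<lambda>p. Af q (snd p) (fst p) * P p)
     = integral\<^sup>L (lborel \<Otimes>\<^sub>M lborel) (\<lambda>p. Af q (fst p) (snd p) * P p)"
  proof -
    have "integral\<^sup>L (lborel \<Otimes>\<^sub>M lborel) (\<lambda>(x, y). (\<lambda>p. Af q (fst p) (snd p) * P p) (y, x))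
       = integral\<^sup>L (lborel \<Otimes>\<^sub>M lborel) (\<lambda>p. Af q (fst p) (snd p) * P p)"
      by (rule lborel_pair.integral_product_swap) measurable
    moreover have "(\<lambda>(x, y). (\<lambda>p. Af q (fst p) (snd p) * P p) (y, x)) = (\<lambda>p. Af q (snd p) (fst p) * P p)"
      by (auto simp: P_sym)
    ultimately show ?thesis by simp
  qed
  show ?thesis
    unfolding 1 e1a 2 Bochner_Integration.integral_add[OF iA iA'] 3 by simp
qed

end

lemma per_s:
  fixes Psi :: "real \<Rightarrow> real \<Rightarrow> real" and G :: "real \<Rightarrow> real"
  assumes K: "kernel_assms Psi \<beta> k" and q: "q > 0"
    and Gm: "(\<lambda>z. indicator {0<..} z * G z) \<in> borel_measurable borel"
    and Gpos: "\<forall>z>0. G z \<ge> 0"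
    and Gint: "set_integrable lebesgue {0<..} (\<lambda>z. (z powr (-2*\<beta>) + z) * G z)"
  shows "(LINT z:{0<..}|lebesgue. LINT y:{0<..}|lebesgue. (om q (z + y) - om q z - om q y) * Psi z y * G z * G y)
    = -2 * (LINT z:{0<..<q}|lebesgue. LINT y:{q - z<..}|lebesgue. z * Psi z y * G z * G y)"
proof -
  define h where "h z = indicator {0<..} z * G z" for z
  have hm: "h \<in> borel_measurable borel" using Gm unfolding h_def[abs_def] .
  have hpos: "\<And>z. 0 \<le> h z" using Gpos unfolding h_def by (auto simp: indicator_def)
  have hzero: "\<And>z. z \<le> 0 \<Longrightarrow> h z = 0" unfolding h_def by (auto simp: indicator_def)
  have "integrable lebesgue (\<lambda>z. (z powr (-2*\<beta>) + z) * h z)"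
  proof -
    have "(\<lambda>z. indicator {0<..} z *\<^sub>R ((z powr (-2*\<beta>) + z) * G z)) = (\<lambda>z. (z powr (-2*\<beta>) + z) * h z)"
      unfolding h_def by (auto simp: indicator_def)
    then show ?thesis using Gint unfolding set_integrable_def by simp
  qed
  then have hint: "integrable lborel (\<lambda>z. (z powr (-2*\<beta>) + z) * h z)"
    using hm by (subst (asm) integrable_completion) (auto simp: measurable_lborel1)
  interpret ks Psi \<beta> k h
    using K hm hpos hzero hint by unfold_locales auto
  have Pm2: "(\<lambda>y. F (z, y)) \<in> borel_measurable lborel"
    if "F \<in> borel_measurable (lborel \<Otimes>\<^sub>M lborel)" for F :: "real \<times> real \<Rightarrow> real" and z
    using measurable_comp[OF measurable_Pair1'[of z lborel lborel] that] by (simp add: comp_def)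
  have PG: "P (z, y) = Psi z y * G z * G y" if "z > 0" "y > 0" for z y
    using that unfolding P_def Kf_def h_def by simp
  have L: "(LINT z:{0<..}|lebesgue. LINT y:{0<..}|lebesgue. (om q (z + y) - om q z - om q y) * Psi z y * G z * G y)
     = (\<integral>z. \<integral>y. W q z y * P (z, y) \<partial>lborel \<partial>lborel)"
  proof -
    have inner: "indicator {0<..} z *\<^sub>R (LINT y:{0<..}|lebesgue. (om q (z + y) - om q z - om q y) * Psi z y * G z * G y)
        = (\<integral>y. W q z y * P (z, y) \<partial>lborel)" for z
    proof (cases "z > 0")
      case True
      have "(LINT y:{0<..}|lebesgue. (om q (z + y) - om q z - om q y) * Psi z y * G z * G y)
          = integral\<^sup>L lebesgue (\<lambda>y. W q z y * P (z, y))"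
        unfolding set_lebesgue_integral_def
      proof (rule Bochner_Integration.integral_cong[OF refl])
        fix y
        show "indicator {0<..} y *\<^sub>R ((om q (z + y) - om q z - om q y) * Psi z y * G z * G y) = W q z y * P (z, y)"
        proof (cases "y > 0")
          case True then show ?thesis using PG[OF \<open>z > 0\<close> True] unfolding W_def by simp
        next
          case False then show ?thesis using P_zero[of "(z, y)"] by simp
        qed
      qed
      also have "\<dots> = (\<integral>y. W q z y * P (z, y) \<partial>lborel)"
      proof (rule integral_completion)
        have "(\<lambda>p. W q (fst p) (snd p) * P p) \<in> borel_measurable (lborel \<Otimes>\<^sub>M lborel)" by measurable
        from Pm2[OF this, of z] show "(\<lambda>y. W q z y * P (z, y)) \<in> borel_measurable lborel" by simp
      qed
      finally show ?thesis using True by simp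
    next
      case False
      then have "\<And>y. P (z, y) = 0" using P_zero by auto
      then show ?thesis using False by simp
    qed
    have "(LINT z:{0<..}|lebesgue. LINT y:{0<..}|lebesgue. (om q (z + y) - om q z - om q y) * Psi z y * G z * G y)
       = integral\<^sup>L lebesgue (\<lambda>z. \<integral>y. W q z y * P (z, y) \<partial>lborel)"
      unfolding set_lebesgue_integral_def[of _ "{0<..}" "\<lambda>z. LINT y:{0<..}|lebesgue. _ z y"] inner ..
    also have "\<dots> = (\<integral>z. \<integral>y. W q z y * P (z, y) \<partial>lborel \<partial>lborel)"
    proof (rule integral_completion)
      have "(\<lambda>p. W q (fst p) (snd p) * P p) \<in> borel_measurable (lborel \<Otimes>\<^sub>M lborel)" by measurable
      then have "case_prod (\<lambda>z y. W q z y * P (z, y)) \<in> borel_measurable (lborel \<Otimes>\<^sub>M lborel)"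
        by (simp add: case_prod_beta')
      then show "(\<lambda>z. \<integral>y. W q z y * P (z, y) \<partial>lborel) \<in> borel_measurable lborel"
        by (rule lborel.borel_measurable_lebesgue_integral)
    qed
    finally show ?thesis .
  qed
  have R: "(LINT z:{0<..<q}|lebesgue. LINT y:{q - z<..}|lebesgue. z * Psi z y * G z * G y)
     = - (\<integral>z. \<integral>y. Af q z y * P (z, y) \<partial>lborel \<partial>lborel)"
  proof -
    have AfPm: "(\<lambda>y. Af q z y * P (z, y)) \<in> borel_measurable lborel" for z
    proof -
      have "(\<lambda>p. Af q (fst p) (snd p) * P p) \<in> borel_measurable (lborel \<Otimes>\<^sub>M lborel)" by measurable
      from Pm2[OF this, of z] show ?thesis by simp
    qed
    have inner: "indicator {0<..<q} z *\<^sub>R (LINT y:{q - z<..}|lebesgue. z * Psi z y * G z * G y)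
        = - (\<integral>y. Af q z y * P (z, y) \<partial>lborel)" for z
    proof (cases "0 < z \<and> z < q")
      case True
      then have z: "z > 0" "z < q" by auto
      have "(LINT y:{q - z<..}|lebesgue. z * Psi z y * G z * G y)
          = integral\<^sup>L lebesgue (\<lambda>y. indicator {q - z<..} y * (z * P (z, y)))"
        unfolding set_lebesgue_integral_def
      proof (rule Bochner_Integration.integral_cong[OF refl])
        fix y
        show "indicator {q - z<..} y *\<^sub>R (z * Psi z y * G z * G y) = indicator {q - z<..} y * (z * P (z, y))"
        proof (cases "y > q - z")
          case True then have "y > 0" using z by auto
          then show ?thesis using PG[OF \<open>z > 0\<close>] True by simp
        next
          case False then show ?thesis by simp
        qed
      qed
      also have "\<dots> = integral\<^sup>L lebesgue (\<lambda>y. - (Af q z y * P (z, y)))"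
      proof (rule integral_cong_AE)
        have "(\<lambda>p. P p) \<in> borel_measurable (lborel \<Otimes>\<^sub>M lborel)" by measurable
        from Pm2[OF this, of z] have "(\<lambda>y. P (z, y)) \<in> borel_measurable lborel" .
        then show "(\<lambda>y. indicator {q - z<..} y * (z * P (z, y))) \<in> borel_measurable lebesgue"
          by (intro measurable_completion) measurable
        show "(\<lambda>y. - (Af q z y * P (z, y))) \<in> borel_measurable lebesgue"
          using borel_measurable_uminus[OF AfPm[of z]] by (rule measurable_completion)
        show "AE y in lebesgue. indicator {q - z<..} y * (z * P (z, y)) = - (Af q z y * P (z, y))"
        proof (rule AE_completion)
          show "AE y in lborel. indicator {q - z<..} y * (z * P (z, y)) = - (Af q z y * P (z, y))"
            using AE_lborel_singleton[of "q - z"]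
            by eventually_elim (use z in \<open>auto simp: Af_def indicator_def\<close>)
        qed
      qed
      also have "\<dots> = - (\<integral>y. Af q z y * P (z, y) \<partial>lborel)"
        by (simp add: integral_completion[OF AfPm])
      finally show ?thesis using True by simp
    next
      case False
      then have "\<And>y. Af q z y = 0" unfolding Af_def by (auto simp: indicator_def)
      then show ?thesis using False by simp
    qed
    have "(LINT z:{0<..<q}|lebesgue. LINT y:{q - z<..}|lebesgue. z * Psi z y * G z * G y)
       = integral\<^sup>L lebesgue (\<lambda>z. - (\<integral>y. Af q z y * P (z, y) \<partial>lborel))"
      unfolding set_lebesgue_integral_def[of _ "{0<..<q}" "\<lambda>z. LINT y:{q - z<..}|lebesgue. _ z y"] inner ..
    also have "\<dots> = integral\<^sup>L lborel (\<lambda>z. - (\<integral>y. Af q z y * P (z, y) \<partial>lborel))"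
    proof (rule integral_completion)
      have "(\<lambda>p. Af q (fst p) (snd p) * P p) \<in> borel_measurable (lborel \<Otimes>\<^sub>M lborel)" by measurable
      then have "case_prod (\<lambda>z y. Af q z y * P (z, y)) \<in> borel_measurable (lborel \<Otimes>\<^sub>M lborel)"
        by (simp add: case_prod_beta')
      then have "(\<lambda>z. \<integral>y. Af q z y * P (z, y) \<partial>lborel) \<in> borel_measurable lborel"
        by (rule lborel.borel_measurable_lebesgue_integral)
      then show "(\<lambda>z. - (\<integral>y. Af q z y * P (z, y) \<partial>lborel)) \<in> borel_measurable lborel"
        by measurable
    qed
    also have "\<dots> = - (\<integral>z. \<integral>y. Af q z y * P (z, y) \<partial>lborel \<partial>lborel)"
      by simp
    finally show ?thesis .
  qed
  show ?thesis unfolding L R key[OF q] by simp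
qed


lemma lebesgue_AE_measurable:
  fixes f g :: "'a::euclidean_space \<Rightarrow> real"
  assumes g: "g \<in> borel_measurable lebesgue" and ae: "AE x in lebesgue. f x = g x"
  shows "f \<in> borel_measurable lebesgue"
proof (rule borel_measurableI)
  fix S :: "real set" assume "open S"
  then have "S \<in> sets borel" by simp
  then have A: "g -` S \<inter> space lebesgue \<in> sets lebesgue" by (rule measurable_sets[OF g])
  show "f -` S \<inter> space lebesgue \<in> sets (lebesgue :: 'a measure)"
  proof (rule completion.in_sets_AE[OF _ A])
    show "AE x in lebesgue. (x \<in> g -` S \<inter> space lebesgue) = (x \<in> f -` S \<inter> space lebesgue)"
      using ae by eventually_elim auto
  qed auto
qed

lemma lebesgue_integral_cong_AE':
  fixes f g :: "'a::euclidean_space \<Rightarrow> real"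
  assumes ae: "AE x in lebesgue. f x = g x"
  shows "integral\<^sup>L lebesgue f = integral\<^sup>L lebesgue g"
proof (cases "g \<in> borel_measurable lebesgue")
  case True
  then have "f \<in> borel_measurable lebesgue" using lebesgue_AE_measurable ae by blast
  then show ?thesis using True ae by (intro integral_cong_AE) auto
next
  case False
  have ae': "AE x in lebesgue. g x = f x" using ae by eventually_elim auto
  have "f \<notin> borel_measurable lebesgue" using lebesgue_AE_measurable[OF _ ae'] False by blast
  then have "\<not> integrable lebesgue f" "\<not> integrable lebesgue g" using False by auto
  then show ?thesis by (simp add: not_integrable_integral_eq)
qed

lemma tint_sets: "tint T \<in> sets lebesgue"
proof -
  have "tint T \<in> sets borel" unfolding tint_def by measurable
  then show ?thesis by simp
qed


theorem lemma3p1: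
  fixes Psi :: "real \<Rightarrow> real \<Rightarrow> real" and \<beta> k :: real and T :: ereal
    and gin :: "real \<Rightarrow> real" and g :: "real \<Rightarrow> real \<Rightarrow> real"
  assumes "kernel_assms Psi \<beta> k"
    and "T > 0"
    and "L1_wt \<beta> gin" and "\<forall>z>0. gin z \<ge> 0"
    and "weak_solution Psi \<beta> T gin g"
  shows "\<forall>q>0. \<forall>t. 0 < t \<and> ereal t < T \<longrightarrow>
    (LINT z:{0<..<q}|lebesgue. z * g z t) - (LINT z:{0<..<q}|lebesgue. z * gin z) =
    - (LINT s:{0<..<t}|lebesgue. LINT z:{0<..<q}|lebesgue. LINT y:{q - z<..}|lebesgue.
         z * Psi z y * g z s * g y s)"
proof (intro allI impI)
  fix q t :: real
  assume q: "q > 0" and t: "0 < t \<and> ereal t < T"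
  note K = assms(1)
  from assms(5) have
    gpos: "\<And>z s. z > 0 \<Longrightarrow> s \<in> tint T \<Longrightarrow> g z s \<ge> 0" and
    gm: "(\<lambda>p. indicator ({0<..} \<times> tint T) p * g (fst p) (snd p)) \<in> borel_measurable borel" and
    gi: "\<And>s. s \<in> tint T \<Longrightarrow> set_integrable lebesgue {0<..} (\<lambda>z. g z s)" and
    aec: "\<exists>C. AE s in lebesgue_on (tint T). L1_wt \<beta> (\<lambda>z. g z s) \<and>
          (LINT z:{0<..}|lebesgue. (z powr (-2*\<beta>) + z) * g z s) \<le> C" and
    weak: "\<And>t \<omega>. t \<in> tint T \<Longrightarrow> t > 0 \<Longrightarrow> \<omega> \<in> borel_measurable borel \<Longrightarrow> bounded (\<omega> ` {0<..}) \<Longrightarrow>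
        (LINT z:{0<..}|lebesgue. (g z t - gin z) * \<omega> z) =
        1/2 * (LINT s:{0<..<t}|lebesgue. LINT z:{0<..}|lebesgue. LINT y:{0<..}|lebesgue.
                 (\<omega> (z + y) - \<omega> z - \<omega> y) * Psi z y * g z s * g y s)"
    unfolding weak_solution_def by blast+
  have tt: "t \<in> tint T" using t unfolding tint_def by auto
  have bnd: "bounded (om q ` {0<..})"
    unfolding bounded_iff using om_bound[OF q] by auto
  note W1 = weak[OF tt _ om_m bnd]
  have tpos: "t > 0" using t by simp
  have gt_int: "integrable lebesgue (\<lambda>z. indicator {0<..} z *\<^sub>R g z t)"
    using gi[OF tt] unfolding set_integrable_def .
  have gin_int: "integrable lebesgue (\<lambda>z. indicator {0<..} z *\<^sub>R ((z powr (-2*\<beta>) + z) * gin z))"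
    using assms(3) unfolding L1_wt_def set_integrable_def by blast
  have gin_m: "(\<lambda>x. if x \<in> {0<..} then gin x else 0) \<in> borel_measurable lebesgue"
    using assms(3) unfolding L1_wt_def
    by (subst (asm) measurable_restrict_space_iff) auto
  have indm: "(\<lambda>z. indicator {0<..<q} z * z) \<in> borel_measurable (lebesgue :: real measure)"
    by (intro measurable_completion) measurable
  have i1: "integrable lebesgue (\<lambda>z. indicator {0<..<q} z *\<^sub>R (z * g z t))"
  proof (rule Bochner_Integration.integrable_bound)
    show "integrable lebesgue (\<lambda>z. q * (indicator {0<..} z *\<^sub>R g z t))"
      using gt_int by (rule integrable_mult_right)
    have "(\<lambda>z. (indicator {0<..<q} z * z) * (indicator {0<..} z *\<^sub>R g z t)) \<in> borel_measurable lebesgue"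
      using indm borel_measurable_integrable[OF gt_int] by (rule borel_measurable_times)
    moreover have "(\<lambda>z. (indicator {0<..<q} z * z) * (indicator {0<..} z *\<^sub>R g z t))
       = (\<lambda>z. indicator {0<..<q} z *\<^sub>R (z * g z t))"
      by (auto simp: fun_eq_iff indicator_def)
    ultimately show "(\<lambda>z. indicator {0<..<q} z *\<^sub>R (z * g z t)) \<in> borel_measurable lebesgue" by simp
    show "AE z in lebesgue. norm (indicator {0<..<q} z *\<^sub>R (z * g z t)) \<le> norm (q * (indicator {0<..} z *\<^sub>R g z t))"
    proof (intro AE_I2)
      fix z :: real
      show "norm (indicator {0<..<q} z *\<^sub>R (z * g z t)) \<le> norm (q * (indicator {0<..} z *\<^sub>R g z t))"
      proof (cases "0 < z \<and> z < q")
        case True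
        then have "\<bar>z\<bar> * \<bar>g z t\<bar> \<le> q * \<bar>g z t\<bar>" by (intro mult_right_mono) auto
        then show ?thesis using True q by (simp add: abs_mult)
      qed auto
    qed
  qed
  have i2: "integrable lebesgue (\<lambda>z. indicator {0<..<q} z *\<^sub>R (z * gin z))"
  proof (rule Bochner_Integration.integrable_bound)
    show "integrable lebesgue (\<lambda>z. indicator {0<..} z *\<^sub>R ((z powr (-2*\<beta>) + z) * gin z))"
      by (rule gin_int)
    have "(\<lambda>z. (indicator {0<..<q} z * z) * (if z \<in> {0<..} then gin z else 0)) \<in> borel_measurable lebesgue"
      using indm gin_m by (rule borel_measurable_times)
    moreover have "(\<lambda>z. (indicator {0<..<q} z * z) * (if z \<in> {0<..} then gin z else 0))
       = (\<lambda>z. indicator {0<..<q} z *\<^sub>R (z * gin z))"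
      by (auto simp: fun_eq_iff indicator_def)
    ultimately show "(\<lambda>z. indicator {0<..<q} z *\<^sub>R (z * gin z)) \<in> borel_measurable lebesgue" by simp
    show "AE z in lebesgue. norm (indicator {0<..<q} z *\<^sub>R (z * gin z)) \<le> norm (indicator {0<..} z *\<^sub>R ((z powr (-2*\<beta>) + z) * gin z))"
    proof (intro AE_I2)
      fix z :: real
      show "norm (indicator {0<..<q} z *\<^sub>R (z * gin z)) \<le> norm (indicator {0<..} z *\<^sub>R ((z powr (-2*\<beta>) + z) * gin z))"
      proof (cases "0 < z \<and> z < q")
        case True
        then have g0: "gin z \<ge> 0" using assms(4) by auto
        have "z * gin z \<le> (z powr (-2*\<beta>) + z) * gin z"
          using g0 by (intro mult_right_mono) auto
        then show ?thesis using True g0 by (simp add: abs_mult)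
      qed auto
    qed
  qed
  have Lft: "(LINT z:{0<..}|lebesgue. (g z t - gin z) * om q z)
      = (LINT z:{0<..<q}|lebesgue. z * g z t) - (LINT z:{0<..<q}|lebesgue. z * gin z)"
  proof -
    have eq: "(\<lambda>z. indicator {0<..} z *\<^sub>R ((g z t - gin z) * om q z))
       = (\<lambda>z. indicator {0<..<q} z *\<^sub>R (z * g z t) - indicator {0<..<q} z *\<^sub>R (z * gin z))"
      by (auto simp: om_def indicator_def algebra_simps fun_eq_iff)
    show ?thesis unfolding set_lebesgue_integral_def eq using i1 i2 by simp
  qed
  let ?F = "\<lambda>s. LINT z:{0<..}|lebesgue. LINT y:{0<..}|lebesgue.
                 (om q (z + y) - om q z - om q y) * Psi z y * g z s * g y s"
  let ?G = "\<lambda>s. LINT z:{0<..<q}|lebesgue. LINT y:{q - z<..}|lebesgue. z * Psi z y * g z s * g y s"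
  from aec obtain C where "AE s in lebesgue_on (tint T). L1_wt \<beta> (\<lambda>z. g z s) \<and>
          (LINT z:{0<..}|lebesgue. (z powr (-2*\<beta>) + z) * g z s) \<le> C" by blast
  then have ae: "AE s in lebesgue. s \<in> tint T \<longrightarrow> L1_wt \<beta> (\<lambda>z. g z s)"
    by (subst (asm) AE_restrict_space_iff) (auto simp: tint_sets elim: eventually_mono)
  have Rgt: "(LINT s:{0<..<t}|lebesgue. ?F s) = (LINT s:{0<..<t}|lebesgue. -2 * ?G s)"
    unfolding set_lebesgue_integral_def[of lebesgue "{0<..<t}"]
  proof (rule lebesgue_integral_cong_AE')
    show "AE s in lebesgue. indicator {0<..<t} s *\<^sub>R ?F s = indicator {0<..<t} s *\<^sub>R (-2 * ?G s)"
      using ae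
    proof eventually_elim
      case (elim s)
      show ?case
      proof (cases "s \<in> {0<..<t}")
        case True
        then have st: "s \<in> tint T" using t unfolding tint_def
          by (auto intro: less_trans[of "ereal s" "ereal t" T])
        have Gm: "(\<lambda>z. indicator {0<..} z * g z s) \<in> borel_measurable borel"
        proof -
          have c: "(\<lambda>z::real. (z, s)) \<in> borel_measurable borel"
            by (intro borel_measurable_continuous_onI continuous_intros)
          have "(\<lambda>z. indicator ({0<..} \<times> tint T) (z, s) * g (fst (z, s)) (snd (z, s))) \<in> borel_measurable borel"
            using measurable_compose[OF c gm] by (simp add: comp_def)
          moreover have "(\<lambda>z. indicator ({0<..} \<times> tint T) (z, s) * g (fst (z, s)) (snd (z, s)))
              = (\<lambda>z. indicator {0<..} z * g z s)"
            using st by (auto simp: indicator_def fun_eq_iff)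
          ultimately show ?thesis by simp
        qed
        have "?F s = -2 * ?G s"
          using per_s[OF K q Gm] gpos[OF _ st] elim st unfolding L1_wt_def by auto
        then show ?thesis by simp
      qed simp
    qed
  qed
  have Rgt2: "(LINT s:{0<..<t}|lebesgue. -2 * ?G s) = -2 * (LINT s:{0<..<t}|lebesgue. ?G s)"
  proof -
    have "(\<lambda>s. indicator {0<..<t} s *\<^sub>R (-2 * ?G s)) = (\<lambda>s. -2 * (indicator {0<..<t} s *\<^sub>R ?G s))"
      by (auto simp: fun_eq_iff)
    then show ?thesis unfolding set_lebesgue_integral_def[of lebesgue "{0<..<t}"] by simp
  qed
  show "(LINT z:{0<..<q}|lebesgue. z * g z t) - (LINT z:{0<..<q}|lebesgue. z * gin z)
      = - (LINT s:{0<..<t}|lebesgue. ?G s)"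
    using W1[OF tpos] Lft Rgt Rgt2 by simp
qed
end
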